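(* Let $f\colon X\to Y$ be a perfect surjective map between regular spaces $X$ and $Y$. If $X$ is very I-favorable, then $Y$ is very I-favorable.
   Context: For a family $\mathcal P$ of open subsets of $X$ contained in a family $\mathcal Q$ of open subsets of $X$, write $\mathcal P\subset_!\mathcal Q$ if for every subfamily $\mathcal S\subset\mathcal P$ and every point $x\notin\operatorname{cl}_X\bigcup\mathcal S$ there exists $W\in\mathcal P$ with $x\in W$ and $W\cap\bigcup\mathcal S=\emptyset$. $[\mathcal Q]^{\le\omega}$ denotes the set of countable subfamilies of $\mathcal Q$. A family $\mathcal C\subset[\mathcal Q]^{\le\omega}$ is a club if (i) for every increasing sequence $C_1\subset C_2\subset\cdots$ in $\mathcal C$, $\bigcup_nC_n\in\mathcal C$, and (ii) every $B\in[\mathcal Q]^{\le\omega}$ is contained in some $C\in\mathcal C$. A space $X$ with topology $\mathcal T_X$ is very I-favorable if $\{\mathcal P\in[\mathcal T_X]^{\le\omega}:\mathcal P\subset_!\mathcal T_X\}$ contains a club. A perfect map is a continuous closed map whose fibers are compact. *)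

theory Defs
  imports "HOL-Analysis.Analysis"
begin

definition opens :: "'a topology \<Rightarrow> 'a set set" where
  "opens X = {U. openin X U}"

definition sub_bang :: "'a topology \<Rightarrow> 'a set set \<Rightarrow> 'a set set \<Rightarrow> bool" where
  "sub_bang X P Q \<longleftrightarrow> P \<subseteq> Q \<and> Q \<subseteq> opens X \<and>
     (\<forall>S \<subseteq> P. \<forall>x \<in> topspace X. x \<notin> X closure_of (\<Union>S) \<longrightarrow>
        (\<exists>W \<in> P. x \<in> W \<and> W \<inter> \<Union>S = {}))"

definition countable_subfams :: "'b set \<Rightarrow> 'b set set" where
  "countable_subfams Q = {P. P \<subseteq> Q \<and> countable P}"

definition is_club :: "'b set \<Rightarrow> 'b set set \<Rightarrow> bool" where
  "is_club Q C \<longleftrightarrow> C \<subseteq> countable_subfams Q \<and>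
     (\<forall>Cs :: nat \<Rightarrow> 'b set. (\<forall>n. Cs n \<in> C) \<and> (\<forall>n. Cs n \<subseteq> Cs (Suc n)) \<longrightarrow> (\<Union>n. Cs n) \<in> C) \<and>
     (\<forall>B \<in> countable_subfams Q. \<exists>D \<in> C. B \<subseteq> D)"

definition very_I_favorable :: "'a topology \<Rightarrow> bool" where
  "very_I_favorable X \<longleftrightarrow>
     (\<exists>C. is_club (opens X) C \<and> C \<subseteq> {P \<in> countable_subfams (opens X). sub_bang X P (opens X)})"

end

theory Submission
  imports Defs
begin

primrec kD :: "'x set \<Rightarrow> 'x set set \<Rightarrow> 'x list \<Rightarrow> 'x set" where
  "kD A C [] = (SOME E. E \<in> C)"
| "kD A C (x#xs) = (SOME E. E \<in> C \<and> kD A C xs \<union> ({x} \<inter> A) \<subseteq> E)"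

lemma kD_props:
  assumes "is_club A C"
  shows "kD A C xs \<in> C \<and> (\<forall>x. kD A C xs \<union> ({x} \<inter> A) \<subseteq> kD A C (x#xs))"
proof (induction xs)
  case Nil
  have "{} \<in> countable_subfams A" by (simp add: countable_subfams_def)
  then have "\<exists>E. E \<in> C" using assms unfolding is_club_def by blast
  then have "kD A C [] \<in> C" by (simp, rule someI_ex)
  moreover have "\<forall>x. kD A C [] \<union> ({x} \<inter> A) \<subseteq> kD A C [x]"
  proof
    fix x
    have "kD A C [] \<union> ({x} \<inter> A) \<in> countable_subfams A"
      using \<open>kD A C [] \<in> C\<close> assms unfolding is_club_def countable_subfams_def by auto
    then have "\<exists>E. E \<in> C \<and> kD A C [] \<union> ({x} \<inter> A) \<subseteq> E"
      using assms unfolding is_club_def by blast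
    from someI_ex[OF this] show "kD A C [] \<union> ({x} \<inter> A) \<subseteq> kD A C [x]" by simp
  qed
  ultimately show ?case by blast
next
  case (Cons y ys)
  have ex: "\<exists>E. E \<in> C \<and> kD A C zs \<union> ({x} \<inter> A) \<subseteq> E" if "kD A C zs \<in> C" for zs x
  proof -
    have "kD A C zs \<union> ({x} \<inter> A) \<in> countable_subfams A"
      using that assms unfolding is_club_def countable_subfams_def by auto
    then show ?thesis using assms unfolding is_club_def by blast
  qed
  have "kD A C (y#ys) \<in> C" using someI_ex[OF ex[OF Cons[THEN conjunct1]]] by simp
  moreover have "\<forall>x. kD A C (y#ys) \<union> ({x} \<inter> A) \<subseteq> kD A C (x#y#ys)"
    using someI_ex[OF ex[OF \<open>kD A C (y#ys) \<in> C\<close>]] by simp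
  ultimately show ?case by blast
qed

lemma kD_closed_in:
  assumes club: "is_club A C" and P: "countable P" "P \<subseteq> A"
    and cl: "\<forall>xs. set xs \<subseteq> P \<longrightarrow> kD A C xs \<subseteq> P"
  shows "P \<in> C"
proof (cases "P = {}")
  case True
  then have "kD A C [] = {}" using cl by auto
  then show ?thesis using kD_props[OF club, of "[]"] True by simp
next
  case False
  define b where "b = from_nat_into P"
  have rb: "range b = P" using False P b_def by simp
  define L where "L n = map b (rev [0..<Suc n])" for n
  have LS: "L (Suc n) = b (Suc n) # L n" for n by (simp add: L_def)
  have L0: "L 0 = [b 0]" by (simp add: L_def)
  have setL: "set (L n) \<subseteq> P" for n using rb by (auto simp: L_def)
  define Cs where "Cs n = kD A C (L n)" for n
  have inC: "\<forall>n. Cs n \<in> C" unfolding Cs_def using kD_props[OF club] by simp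
  have ch: "\<forall>n. Cs n \<subseteq> Cs (Suc n)"
  proof
    fix n
    have "kD A C (L n) \<subseteq> kD A C (b (Suc n) # L n)" using kD_props[OF club, of "L n"] by blast
    then show "Cs n \<subseteq> Cs (Suc n)" unfolding Cs_def LS .
  qed
  have clubch: "\<And>Cs. (\<forall>n. Cs n \<in> C) \<and> (\<forall>n. Cs n \<subseteq> Cs (Suc n)) \<Longrightarrow> (\<Union>n. Cs n) \<in> C"
    using club unfolding is_club_def by blast
  have "(\<Union>n. Cs n) \<in> C" using clubch inC ch by blast
  moreover have "(\<Union>n. Cs n) = P"
  proof
    show "(\<Union>n. Cs n) \<subseteq> P"
    proof (rule UN_least)
      fix n show "Cs n \<subseteq> P" unfolding Cs_def using cl setL by blast
    qed
    show "P \<subseteq> (\<Union>n. Cs n)"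
    proof
      fix p assume "p \<in> P"
      then obtain n where n: "b n = p" using rb by blast
      have "p \<in> Cs n"
      proof (cases n)
        case 0
        then show ?thesis using kD_props[OF club, of "[]"] \<open>p \<in> P\<close> P n L0 unfolding Cs_def by auto
      next
        case (Suc m)
        have "kD A C (L m) \<union> ({b (Suc m)} \<inter> A) \<subseteq> kD A C (b (Suc m) # L m)"
          using kD_props[OF club, of "L m"] by blast
        moreover have "p \<in> {b (Suc m)} \<inter> A" using \<open>p \<in> P\<close> P n Suc by auto
        ultimately show ?thesis unfolding Cs_def Suc LS by blast
      qed
      then show "p \<in> (\<Union>n. Cs n)" by blast
    qed
  qed
  ultimately show ?thesis by simp
qed


primrec Piter :: "'a topology \<Rightarrow> ('a \<Rightarrow> 'b) \<Rightarrow> ('a set list \<Rightarrow> 'a set set) \<Rightarrow> 'b set set \<Rightarrow> nat \<Rightarrow> 'a set set" where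
  "Piter X f D Q 0 = (\<lambda>V. {x \<in> topspace X. f x \<in> V}) ` Q"
| "Piter X f D Q (Suc n) = Piter X f D Q n \<union> \<Union> (D ` {xs. set xs \<subseteq> Piter X f D Q n})"

definition PQ :: "'a topology \<Rightarrow> ('a \<Rightarrow> 'b) \<Rightarrow> ('a set list \<Rightarrow> 'a set set) \<Rightarrow> 'b set set \<Rightarrow> 'a set set" where
  "PQ X f D Q = (\<Union>n. Piter X f D Q n)"

definition fs :: "'a topology \<Rightarrow> 'b topology \<Rightarrow> ('a \<Rightarrow> 'b) \<Rightarrow> 'a set \<Rightarrow> 'b set" where
  "fs X Y f U = {y \<in> topspace Y. \<forall>x\<in>topspace X. f x = y \<longrightarrow> x \<in> U}"

definition good :: "'a topology \<Rightarrow> 'b topology \<Rightarrow> ('a \<Rightarrow> 'b) \<Rightarrow> ('a set list \<Rightarrow> 'a set set) \<Rightarrow> 'b set set \<Rightarrow> bool" where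
  "good X Y f D Q \<longleftrightarrow> Q \<in> countable_subfams (opens Y) \<and>
     (\<forall>xs. set xs \<subseteq> PQ X f D Q \<longrightarrow> fs X Y f (\<Union>(set xs)) \<in> Q)"

lemma Piter_inc: "incseq (Piter X f D Q)"
  by (rule incseq_SucI) auto

lemma list_in_chain:
  assumes "incseq A"
  shows "set xs \<subseteq> (\<Union>n. A n) \<Longrightarrow> \<exists>n. set xs \<subseteq> A n"
proof (induction xs)
  case Nil
  then show ?case by simp
next
  case (Cons x xs)
  then obtain n where n: "set xs \<subseteq> A n" by auto
  from Cons.prems obtain m where m: "x \<in> A m" by auto
  have "A n \<subseteq> A (max n m)" "A m \<subseteq> A (max n m)" using incseqD[OF assms, of n "max n m"] incseqD[OF assms, of m "max n m"] by auto
  then have "set (x#xs) \<subseteq> A (max n m)" using n m by auto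
  then show ?case by blast
qed

lemma Piter_sub_PQ: "Piter X f D Q n \<subseteq> PQ X f D Q"
  unfolding PQ_def by blast

lemma PQ_closed:
  assumes "set xs \<subseteq> PQ X f D Q"
  shows "D xs \<subseteq> PQ X f D Q"
proof -
  obtain n where "set xs \<subseteq> Piter X f D Q n"
    using list_in_chain[OF Piter_inc] assms unfolding PQ_def by blast
  then have "D xs \<subseteq> Piter X f D Q (Suc n)" by auto
  then show ?thesis using Piter_sub_PQ by blast
qed

lemma Piter_mono_Q: "Q \<subseteq> Q' \<Longrightarrow> Piter X f D Q n \<subseteq> Piter X f D Q' n"
proof (induction n)
  case 0
  then show ?case by auto
next
  case (Suc n)
  have a: "{xs. set xs \<subseteq> Piter X f D Q n} \<subseteq> {xs. set xs \<subseteq> Piter X f D Q' n}"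
    using Suc.IH Suc.prems by auto
  show ?case
    unfolding Piter.simps by (rule Un_mono[OF Suc.IH[OF Suc.prems] Union_mono[OF image_mono[OF a]]])
qed

lemma PQ_mono: "Q \<subseteq> Q' \<Longrightarrow> PQ X f D Q \<subseteq> PQ X f D Q'"
  unfolding PQ_def by (rule UN_mono[OF order_refl Piter_mono_Q])

lemma PQ_chain:
  assumes inc: "incseq Qs"
  shows "PQ X f D (\<Union>n. Qs n) \<subseteq> (\<Union>m. PQ X f D (Qs m))"
proof -
  have incP: "incseq (\<lambda>m. PQ X f D (Qs m))"
  proof (rule incseq_SucI)
    fix n show "PQ X f D (Qs n) \<le> PQ X f D (Qs (Suc n))"
      by (rule PQ_mono, rule incseqD[OF inc], simp)
  qed
  have ksub: "Piter X f D (\<Union>n. Qs n) k \<subseteq> (\<Union>m. PQ X f D (Qs m))" for k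
  proof (induction k)
    case 0
    show ?case
    proof
      fix U assume "U \<in> Piter X f D (\<Union>n. Qs n) 0"
      then obtain V m where "V \<in> Qs m" "U = {x \<in> topspace X. f x \<in> V}" by auto
      then have "U \<in> Piter X f D (Qs m) 0" by simp
      then have "U \<in> PQ X f D (Qs m)" using Piter_sub_PQ[of X f D "Qs m" 0] by blast
      then show "U \<in> (\<Union>m. PQ X f D (Qs m))" by blast
    qed
  next
    case (Suc k)
    show ?case
    proof
      fix U assume "U \<in> Piter X f D (\<Union>n. Qs n) (Suc k)"
      then consider "U \<in> Piter X f D (\<Union>n. Qs n) k"
        | xs where "set xs \<subseteq> Piter X f D (\<Union>n. Qs n) k" "U \<in> D xs"
        unfolding Piter.simps by blast
      then show "U \<in> (\<Union>m. PQ X f D (Qs m))"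
      proof cases
        case 1
        then show ?thesis using Suc.IH by blast
      next
        case 2
        have "set xs \<subseteq> (\<Union>m. PQ X f D (Qs m))" using 2(1) Suc.IH by (rule order_trans)
        then obtain m where "set xs \<subseteq> PQ X f D (Qs m)"
          using list_in_chain[OF incP] by blast
        then have "U \<in> PQ X f D (Qs m)" using PQ_closed[of xs X f D "Qs m"] 2(2) by blast
        then show ?thesis by blast
      qed
    qed
  qed
  show ?thesis unfolding PQ_def[of X f D "\<Union>n. Qs n"] by (rule UN_least, rule ksub)
qed

lemma PQ_countable:
  assumes "countable Q" "\<forall>xs. countable (D xs)"
  shows "countable (PQ X f D Q)"
proof -
  have "countable (Piter X f D Q n)" for n
  proof (induction n)
    case 0
    then show ?case using assms by simp
  next
    case (Suc n)
    have "countable {xs. set xs \<subseteq> Piter X f D Q n}"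
      using Suc countable_lists[of "Piter X f D Q n"] by (simp add: lists_eq_set)
    then show ?case using Suc assms by auto
  qed
  then show ?thesis unfolding PQ_def by auto
qed

lemma PQ_opens:
  assumes "continuous_map X Y f" "Q \<subseteq> opens Y" "\<forall>xs. D xs \<subseteq> opens X"
  shows "PQ X f D Q \<subseteq> opens X"
proof -
  have "Piter X f D Q n \<subseteq> opens X" for n
  proof (induction n)
    case 0
    show ?case
    proof
      fix U assume "U \<in> Piter X f D Q 0"
      then obtain V where V: "V \<in> Q" "U = {x \<in> topspace X. f x \<in> V}" by auto
      then have "openin Y V" using assms(2) unfolding opens_def by blast
      then have "openin X U" using V(2) openin_continuous_map_preimage[OF assms(1)] by blast
      then show "U \<in> opens X" unfolding opens_def by simp
    qed
  next
    case (Suc n)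
    show ?case unfolding Piter.simps using Suc.IH assms(3) by blast
  qed
  then show ?thesis unfolding PQ_def by blast
qed

lemma fs_open:
  assumes "perfect_map X Y f" "openin X U"
  shows "openin Y (fs X Y f U)"
proof -
  have cm: "closed_map X Y f" using assms(1) by (rule perfect_imp_closed_map)
  have "closedin X (topspace X - U)" by (rule closedin_diff[OF closedin_topspace assms(2)])
  then have "closedin Y (f ` (topspace X - U))" using cm unfolding closed_map_def by blast
  then have "openin Y (topspace Y - f ` (topspace X - U))" by (rule openin_diff[OF openin_topspace])
  moreover have "topspace Y - f ` (topspace X - U) = fs X Y f U"
  proof
    show "topspace Y - f ` (topspace X - U) \<subseteq> fs X Y f U"
    proof
      fix y assume y: "y \<in> topspace Y - f ` (topspace X - U)"
      have "\<forall>x\<in>topspace X. f x = y \<longrightarrow> x \<in> U"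
      proof (intro ballI impI)
        fix x assume "x \<in> topspace X" "f x = y"
        then show "x \<in> U" using y by blast
      qed
      then show "y \<in> fs X Y f U" using y unfolding fs_def by blast
    qed
    show "fs X Y f U \<subseteq> topspace Y - f ` (topspace X - U)"
    proof
      fix y assume y: "y \<in> fs X Y f U"
      then have y1: "y \<in> topspace Y" and y2: "\<forall>x\<in>topspace X. f x = y \<longrightarrow> x \<in> U"
        unfolding fs_def by auto
      have "y \<notin> f ` (topspace X - U)"
      proof
        assume "y \<in> f ` (topspace X - U)"
        then obtain x where "x \<in> topspace X" "x \<notin> U" "f x = y" by blast
        then show False using y2 by blast
      qed
      then show "y \<in> topspace Y - f ` (topspace X - U)" using y1 by blast
    qed
  qed
  ultimately show ?thesis by simp
qed

lemma good_sub_bang: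
  assumes pm: "perfect_map X Y f"
    and clos: "\<And>P. countable P \<Longrightarrow> P \<subseteq> opens X \<Longrightarrow> (\<forall>xs. set xs \<subseteq> P \<longrightarrow> D xs \<subseteq> P) \<Longrightarrow> sub_bang X P (opens X)"
    and Dop: "\<forall>xs. D xs \<subseteq> opens X" and Dc: "\<forall>xs. countable (D xs)"
    and g: "good X Y f D Q"
  shows "sub_bang Y Q (opens Y)"
proof -
  define P where "P = PQ X f D Q"
  have cont: "continuous_map X Y f" using pm by (rule perfect_imp_continuous_map)
  have sj: "f ` topspace X = topspace Y" using pm by (rule perfect_imp_surjective_map)
  have prp: "proper_map X Y f" using pm by (rule perfect_imp_proper_map)
  have Qc: "countable Q" and Qop: "Q \<subseteq> opens Y" using g unfolding good_def countable_subfams_def by auto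
  have gQ: "\<And>xs. set xs \<subseteq> P \<Longrightarrow> fs X Y f (\<Union>(set xs)) \<in> Q" using g unfolding good_def P_def by blast
  have Pop: "P \<subseteq> opens X" unfolding P_def by (rule PQ_opens[OF cont Qop Dop])
  have Pc: "countable P" unfolding P_def by (rule PQ_countable[OF Qc Dc])
  have Pcl: "\<forall>xs. set xs \<subseteq> P \<longrightarrow> D xs \<subseteq> P" unfolding P_def using PQ_closed by blast
  have sbP: "sub_bang X P (opens X)" by (rule clos[OF Pc Pop Pcl])
  have sbP3: "\<And>S x. S \<subseteq> P \<Longrightarrow> x \<in> topspace X \<Longrightarrow> x \<notin> X closure_of (\<Union>S) \<Longrightarrow> \<exists>W\<in>P. x \<in> W \<and> W \<inter> \<Union>S = {}"
    using sbP unfolding sub_bang_def by blast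
  have key: "\<exists>W\<in>Q. y \<in> W \<and> W \<inter> \<Union>S = {}"
    if S: "S \<subseteq> Q" and y: "y \<in> topspace Y" and ny: "y \<notin> Y closure_of (\<Union>S)" for S y
  proof -
    define pre where "pre V = {x \<in> topspace X. f x \<in> V}" for V
    define S' where "S' = pre ` S"
    have S'P: "S' \<subseteq> P"
    proof
      fix U assume "U \<in> S'"
      then obtain V where "V \<in> S" "U = pre V" unfolding S'_def by blast
      then have "U \<in> Piter X f D Q 0" using S unfolding pre_def by auto
      then show "U \<in> P" unfolding P_def using Piter_sub_PQ[of X f D Q 0] by blast
    qed
    define T where "T = pre (Y closure_of (\<Union>S))"
    have Tc: "closedin X T" unfolding T_def pre_def
      by (rule closedin_continuous_map_preimage[OF cont closedin_closure_of])
    have "\<Union>S' \<subseteq> T"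
    proof
      fix x assume "x \<in> \<Union>S'"
      then obtain V where V: "V \<in> S" "x \<in> pre V" unfolding S'_def by blast
      then have "x \<in> topspace X" "f x \<in> V" unfolding pre_def by auto
      moreover have "f x \<in> topspace Y"
        using continuous_map_image_subset_topspace[OF cont] \<open>x \<in> topspace X\<close> by blast
      ultimately have "f x \<in> topspace Y \<inter> \<Union>S" using V(1) by blast
      then have "f x \<in> Y closure_of (\<Union>S)" using closure_of_subset_Int[of Y "\<Union>S"] by blast
      then show "x \<in> T" unfolding T_def pre_def using \<open>x \<in> topspace X\<close> by blast
    qed
    then have clS': "X closure_of (\<Union>S') \<subseteq> T" using Tc by (rule closure_of_minimal)
    define K where "K = {x \<in> topspace X. f x = y}"
    have Kc: "compactin X K" using prp y unfolding proper_map_def K_def by blast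
    define UU where "UU = {W \<in> P. W \<inter> \<Union>S' = {}}"
    have UUop: "\<forall>W\<in>UU. openin X W" using Pop unfolding UU_def opens_def by blast
    have KU: "K \<subseteq> \<Union>UU"
    proof
      fix x assume "x \<in> K"
      then have x: "x \<in> topspace X" "f x = y" unfolding K_def by auto
      have "x \<notin> X closure_of (\<Union>S')"
      proof
        assume "x \<in> X closure_of (\<Union>S')"
        then have "x \<in> T" using clS' by blast
        then have "y \<in> Y closure_of (\<Union>S)" unfolding T_def pre_def using x by blast
        then show False using ny by blast
      qed
      then obtain W where "W \<in> P" "x \<in> W" "W \<inter> \<Union>S' = {}" using sbP3[OF S'P x(1)] by blast
      then show "x \<in> \<Union>UU" unfolding UU_def by blast
    qed
    have cpt: "\<forall>U. (\<forall>B\<in>U. openin X B) \<and> K \<subseteq> \<Union>U \<longrightarrow> (\<exists>F. finite F \<and> F \<subseteq> U \<and> K \<subseteq> \<Union>F)"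
      using Kc unfolding compactin_def by blast
    obtain F where F: "finite F" "F \<subseteq> UU" "K \<subseteq> \<Union>F"
      using cpt[rule_format, OF conjI[OF UUop KU]] by blast
    obtain xs where xs: "set xs = F" using finite_list[OF F(1)] by blast
    have "set xs \<subseteq> P" using xs F(2) unfolding UU_def by blast
    then have W0Q: "fs X Y f (\<Union>F) \<in> Q" using gQ xs by blast
    have yW0: "y \<in> fs X Y f (\<Union>F)"
      unfolding fs_def mem_Collect_eq
    proof (intro conjI ballI impI y)
      fix x assume "x \<in> topspace X" "f x = y"
      then have "x \<in> K" unfolding K_def by blast
      then show "x \<in> \<Union>F" using F(3) by blast
    qed
    have disj: "fs X Y f (\<Union>F) \<inter> \<Union>S = {}"
    proof (rule ccontr)
      assume "fs X Y f (\<Union>F) \<inter> \<Union>S \<noteq> {}"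
      then obtain z V where z: "z \<in> fs X Y f (\<Union>F)" "V \<in> S" "z \<in> V" by blast
      then have zt: "z \<in> topspace Y" unfolding fs_def by blast
      then have "z \<in> f ` topspace X" using sj by simp
      then obtain x where x: "x \<in> topspace X" "f x = z" by blast
      then have "x \<in> \<Union>F" using z(1) unfolding fs_def by auto
      then obtain W where W: "W \<in> F" "x \<in> W" by blast
      then have "W \<inter> \<Union>S' = {}" using F(2) unfolding UU_def by blast
      moreover have "x \<in> pre V" unfolding pre_def using x z by blast
      moreover have "pre V \<in> S'" unfolding S'_def using z(2) by blast
      ultimately show False using W(2) by blast
    qed
    show ?thesis using W0Q yW0 disj by blast
  qed
  show ?thesis unfolding sub_bang_def
  proof (intro conjI subset_refl Qop allI impI ballI)
    fix S y assume "S \<subseteq> Q" "y \<in> topspace Y" "y \<notin> Y closure_of \<Union>S"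
    then show "\<exists>W\<in>Q. y \<in> W \<and> W \<inter> \<Union>S = {}" by (rule key)
  qed
qed

primrec Qseq :: "'a topology \<Rightarrow> 'b topology \<Rightarrow> ('a \<Rightarrow> 'b) \<Rightarrow> ('a set list \<Rightarrow> 'a set set) \<Rightarrow> 'b set set \<Rightarrow> nat \<Rightarrow> 'b set set" where
  "Qseq X Y f D B 0 = B"
| "Qseq X Y f D B (Suc n) = Qseq X Y f D B n \<union> (\<lambda>xs. fs X Y f (\<Union>(set xs))) ` {xs. set xs \<subseteq> PQ X f D (Qseq X Y f D B n)}"

lemma good_chain:
  assumes gs: "\<forall>n. good X Y f D (Cs n)" and ch: "\<forall>n. Cs n \<subseteq> Cs (Suc n)"
  shows "good X Y f D (\<Union>n. Cs n)"
proof -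
  have inc: "incseq Cs" using ch by (intro incseq_SucI) blast
  have incP: "incseq (\<lambda>m. PQ X f D (Cs m))"
  proof (rule incseq_SucI)
    fix n show "PQ X f D (Cs n) \<le> PQ X f D (Cs (Suc n))"
      by (rule PQ_mono, rule incseqD[OF inc], simp)
  qed
  have cs: "Cs n \<in> countable_subfams (opens Y)" for n using gs unfolding good_def by blast
  have "countable (\<Union>n. Cs n)" using cs unfolding countable_subfams_def by blast
  moreover have "(\<Union>n. Cs n) \<subseteq> opens Y" using cs unfolding countable_subfams_def by blast
  moreover have "fs X Y f (\<Union>(set xs)) \<in> (\<Union>n. Cs n)" if xs: "set xs \<subseteq> PQ X f D (\<Union>n. Cs n)" for xs
  proof -
    have "set xs \<subseteq> (\<Union>m. PQ X f D (Cs m))" using xs PQ_chain[OF inc, of X f D] by (rule order_trans)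
    then obtain m where "set xs \<subseteq> PQ X f D (Cs m)" using list_in_chain[OF incP] by blast
    then have "fs X Y f (\<Union>(set xs)) \<in> Cs m" using gs unfolding good_def by blast
    then show ?thesis by blast
  qed
  ultimately show ?thesis unfolding good_def countable_subfams_def by blast
qed

lemma good_unbounded:
  assumes pm: "perfect_map X Y f" and Dop: "\<forall>xs. D xs \<subseteq> opens X" and Dc: "\<forall>xs. countable (D xs)"
    and B: "B \<in> countable_subfams (opens Y)"
  shows "\<exists>Q. good X Y f D Q \<and> B \<subseteq> Q"
proof -
  have cont: "continuous_map X Y f" using pm by (rule perfect_imp_continuous_map)
  define Qs where "Qs = Qseq X Y f D B"
  have cs: "Qs n \<in> countable_subfams (opens Y)" for n
  proof (induction n)
    case 0
    then show ?case using B unfolding Qs_def by simp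
  next
    case (Suc n)
    have c: "countable (Qs n)" and o: "Qs n \<subseteq> opens Y" using Suc unfolding countable_subfams_def by auto
    have Pc: "countable (PQ X f D (Qs n))" by (rule PQ_countable[OF c Dc])
    have Po: "PQ X f D (Qs n) \<subseteq> opens X" by (rule PQ_opens[OF cont o Dop])
    have "countable {xs. set xs \<subseteq> PQ X f D (Qs n)}"
      using countable_lists[OF Pc] by (simp add: lists_eq_set)
    then have c2: "countable ((\<lambda>xs. fs X Y f (\<Union>(set xs))) ` {xs. set xs \<subseteq> PQ X f D (Qs n)})" by blast
    have o2: "(\<lambda>xs. fs X Y f (\<Union>(set xs))) ` {xs. set xs \<subseteq> PQ X f D (Qs n)} \<subseteq> opens Y"
    proof
      fix W assume "W \<in> (\<lambda>xs. fs X Y f (\<Union>(set xs))) ` {xs. set xs \<subseteq> PQ X f D (Qs n)}"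
      then obtain xs where xs: "set xs \<subseteq> PQ X f D (Qs n)" "W = fs X Y f (\<Union>(set xs))" by blast
      have "openin X (\<Union>(set xs))" using xs(1) Po unfolding opens_def by blast
      then have "openin Y W" using xs(2) fs_open[OF pm] by blast
      then show "W \<in> opens Y" unfolding opens_def by simp
    qed
    have "Qs (Suc n) = Qs n \<union> (\<lambda>xs. fs X Y f (\<Union>(set xs))) ` {xs. set xs \<subseteq> PQ X f D (Qs n)}"
      unfolding Qs_def by simp
    then show ?case using c o c2 o2 unfolding countable_subfams_def by simp
  qed
  have ch: "\<forall>n. Qs n \<subseteq> Qs (Suc n)" unfolding Qs_def by simp
  have inc: "incseq Qs" using ch by (intro incseq_SucI) blast
  have incP: "incseq (\<lambda>m. PQ X f D (Qs m))"
  proof (rule incseq_SucI)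
    fix n show "PQ X f D (Qs n) \<le> PQ X f D (Qs (Suc n))"
      by (rule PQ_mono, rule incseqD[OF inc], simp)
  qed
  have "countable (\<Union>n. Qs n)" using cs unfolding countable_subfams_def by blast
  moreover have "(\<Union>n. Qs n) \<subseteq> opens Y" using cs unfolding countable_subfams_def by blast
  moreover have "fs X Y f (\<Union>(set xs)) \<in> (\<Union>n. Qs n)" if xs: "set xs \<subseteq> PQ X f D (\<Union>n. Qs n)" for xs
  proof -
    have "set xs \<subseteq> (\<Union>m. PQ X f D (Qs m))" using xs PQ_chain[OF inc, of X f D] by (rule order_trans)
    then obtain m where m: "set xs \<subseteq> PQ X f D (Qs m)" using list_in_chain[OF incP] by blast
    have "Qs (Suc m) = Qs m \<union> (\<lambda>xs. fs X Y f (\<Union>(set xs))) ` {xs. set xs \<subseteq> PQ X f D (Qs m)}"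
      unfolding Qs_def by simp
    then have "fs X Y f (\<Union>(set xs)) \<in> Qs (Suc m)" using m by blast
    then show ?thesis by blast
  qed
  ultimately have "good X Y f D (\<Union>n. Qs n)" unfolding good_def countable_subfams_def by blast
  moreover have "B \<subseteq> (\<Union>n. Qs n)" using Qseq.simps(1)[of X Y f D B] unfolding Qs_def by blast
  ultimately show ?thesis by blast
qed

theorem theorem3p4:
  fixes X :: "'a topology" and Y :: "'b topology" and f :: "'a \<Rightarrow> 'b"
  assumes "regular_space X" and "t1_space X"
    and "regular_space Y" and "t1_space Y"
    and "perfect_map X Y f"
    and "very_I_favorable X"
  shows "very_I_favorable Y"
proof -
  obtain CX where club: "is_club (opens X) CX"
    and sub: "CX \<subseteq> {P \<in> countable_subfams (opens X). sub_bang X P (opens X)}"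
    using assms(6) unfolding very_I_favorable_def by blast
  define D where "D = kD (opens X) CX"
  have DC: "D xs \<in> CX" for xs unfolding D_def using kD_props[OF club] by simp
  have CXs: "CX \<subseteq> countable_subfams (opens X)" using club unfolding is_club_def by (rule conjunct1)
  have DC2: "D xs \<in> countable_subfams (opens X)" for xs using DC[of xs] CXs by (rule subsetD[rotated])
  have Dop: "\<forall>xs. D xs \<subseteq> opens X" using DC2 unfolding countable_subfams_def by simp
  have Dc: "\<forall>xs. countable (D xs)" using DC2 unfolding countable_subfams_def by simp
  have clos: "sub_bang X P (opens X)"
    if "countable P" "P \<subseteq> opens X" "\<forall>xs. set xs \<subseteq> P \<longrightarrow> D xs \<subseteq> P" for P
  proof -
    have "P \<in> CX" using kD_closed_in[OF club that(1,2)] that(3) unfolding D_def by simp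
    then have "P \<in> {P \<in> countable_subfams (opens X). sub_bang X P (opens X)}" using sub by (rule subsetD[rotated])
    then show ?thesis by simp
  qed
  define CY where "CY = {Q. good X Y f D Q}"
  have "is_club (opens Y) CY"
    unfolding is_club_def
  proof (intro conjI allI impI ballI)
    show "CY \<subseteq> countable_subfams (opens Y)" unfolding CY_def good_def by auto
  next
    fix Cs :: "nat \<Rightarrow> 'b set set"
    assume "(\<forall>n. Cs n \<in> CY) \<and> (\<forall>n. Cs n \<subseteq> Cs (Suc n))"
    then show "(\<Union>n. Cs n) \<in> CY" unfolding CY_def using good_chain[of X Y f D Cs] by simp
  next
    fix B assume "B \<in> countable_subfams (opens Y)"
    then obtain Q where "good X Y f D Q" "B \<subseteq> Q" using good_unbounded[OF assms(5) Dop Dc] by blast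
    then show "\<exists>D\<in>CY. B \<subseteq> D" unfolding CY_def by blast
  qed
  moreover have "CY \<subseteq> {P \<in> countable_subfams (opens Y). sub_bang Y P (opens Y)}"
  proof
    fix Q assume "Q \<in> CY"
    then have g: "good X Y f D Q" unfolding CY_def by simp
    have "sub_bang Y Q (opens Y)" by (rule good_sub_bang[OF assms(5) clos Dop Dc g])
    moreover have "Q \<in> countable_subfams (opens Y)" using g unfolding good_def by simp
    ultimately show "Q \<in> {P \<in> countable_subfams (opens Y). sub_bang Y P (opens Y)}" by simp
  qed
  ultimately show ?thesis unfolding very_I_favorable_def by (intro exI conjI)
qed

end
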